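(* Let $(J,S)$ be a homogeneous $d$-dimensional multi-time Markov renewal chain with semi-Markov kernel $q$, and let $1\le u<v\le d$. Define $Y_0=0$, $Y_{n+1}=X^{[u]}_{n+1}\cdot X^{[v]}_{n+1}$ and $S^{[y]}_n=\sum_{k=0}^nY_k$. Then $(J,S^{[y]})$ is a Markov renewal chain with interjump times $(Y_n)_{n\ge1}$ and semi-Markov kernel $$q^{[y]}_{ij}(k)=\sum_{k_{1:d}\in\mathbb{N}^d:\ k_u\cdot k_v=k}q_{ij}(k_{1:d}),\qquad i,j\in E,\ k\in\mathbb{N}.$$
   Context: $E=\{1,\dots,s\}$. $\mathbb{N}^d$ carries the partial order $k\le l$ iff $k_u\le l_u$ for all $u$, and $k<l$ iff $k\le l$, $k\ne l$. A homogeneous $d$-dimensional multi-time Markov renewal chain is a process $(J_n,S_n)_{n\in\mathbb{N}}$, $J_n\in E$, $S_n\in\mathbb{N}^d$, $S_0=0_d$, $S_n<S_{n+1}$, such that a.s. $\mathbb{P}(J_{n+1}=j,S_{n+1}-S_n=k\mid J_{0:n},S_{0:n})=q_{J_nj}(k)$ with $q_{ij}(k)=\mathbb{P}(J_{n+1}=j,S_{n+1}-S_n=k\mid J_n=i)$ independent of $n$. Sojourn times $X_0=0_d$, $X_n=S_n-S_{n-1}$, with $u$-th coordinate $X^{[u]}_n$. "Markov renewal chain with kernel $q^{[y]}$" means $\mathbb{P}(J_{n+1}=j,S^{[y]}_{n+1}-S^{[y]}_n=k\mid J_{0:n},S^{[y]}_{0:n})=q^{[y]}_{J_nj}(k)$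 a.s. *)

theory Defs
  imports "HOL-Probability.Probability"
begin

text \<open>Vectors of \<open>\<nat>\<^sup>d\<close> are represented as functions \<open>nat \<Rightarrow> nat\<close> with coordinates
  indexed by \<open>{1..d}\<close> and vanishing outside \<open>{1..d}\<close>.  On such functions the pointwise
  order \<open>\<le>\<close>/\<open><\<close> of HOL is exactly the partial order of the paper.\<close>

definition NatVec :: "nat \<Rightarrow> (nat \<Rightarrow> nat) set" where
  "NatVec d = {k. \<forall>i. (i < 1 \<or> d < i) \<longrightarrow> k i = 0}"

definition hist_event :: "'w measure \<Rightarrow> (nat \<Rightarrow> 'w \<Rightarrow> nat) \<Rightarrow> (nat \<Rightarrow> 'w \<Rightarrow> 'b)
    \<Rightarrow> nat \<Rightarrow> (nat \<Rightarrow> nat) \<Rightarrow> (nat \<Rightarrow> 'b) \<Rightarrow> 'w set" where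
  "hist_event M J S n js ss = {\<omega> \<in> space M. \<forall>m\<le>n. J m \<omega> = js m \<and> S m \<omega> = ss m}"

text \<open>Since all variables are discrete, the a.s. conditional probability identity is expressed
  in the elementary form P(A \<inter> H) = q * P(H) for every history event H (trivial if P(H)=0).\<close>
definition MTMRC :: "'w measure \<Rightarrow> nat \<Rightarrow> nat \<Rightarrow> (nat \<Rightarrow> 'w \<Rightarrow> nat) \<Rightarrow> (nat \<Rightarrow> 'w \<Rightarrow> (nat \<Rightarrow> nat))
    \<Rightarrow> (nat \<Rightarrow> nat \<Rightarrow> (nat \<Rightarrow> nat) \<Rightarrow> real) \<Rightarrow> bool" where
  "MTMRC M d s J S q \<longleftrightarrow>
     prob_space M \<and>
     (\<forall>n. J n \<in> measurable M (count_space UNIV)) \<and>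
     (\<forall>n. S n \<in> measurable M (count_space UNIV)) \<and>
     (\<forall>n. \<forall>\<omega>\<in>space M. J n \<omega> \<in> {1..s}) \<and>
     (\<forall>n. \<forall>\<omega>\<in>space M. S n \<omega> \<in> NatVec d) \<and>
     (\<forall>\<omega>\<in>space M. S 0 \<omega> = (\<lambda>i. 0)) \<and>
     (\<forall>n. \<forall>\<omega>\<in>space M. S n \<omega> < S (Suc n) \<omega>) \<and>
     (\<forall>n j k js ss.
        measure M ({\<omega> \<in> space M. J (Suc n) \<omega> = j \<and> (\<lambda>i. S (Suc n) \<omega> i - S n \<omega> i) = k}
                    \<inter> hist_event M J S n js ss)
        = q (js n) j k * measure M (hist_event M J S n js ss))"

text \<open>(One-dimensional) Markov renewal chain with kernel qy, as in the context: only the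
  Markov/kernel property is required.\<close>
definition MRC_kernel :: "'w measure \<Rightarrow> (nat \<Rightarrow> 'w \<Rightarrow> nat) \<Rightarrow> (nat \<Rightarrow> 'w \<Rightarrow> nat)
    \<Rightarrow> (nat \<Rightarrow> nat \<Rightarrow> nat \<Rightarrow> real) \<Rightarrow> bool" where
  "MRC_kernel M J T qy \<longleftrightarrow>
     (\<forall>n j k js ts.
        measure M ({\<omega> \<in> space M. J (Suc n) \<omega> = j \<and> T (Suc n) \<omega> - T n \<omega> = k}
                    \<inter> hist_event M J T n js ts)
        = qy (js n) j k * measure M (hist_event M J T n js ts))"

definition sojourn :: "(nat \<Rightarrow> 'w \<Rightarrow> (nat \<Rightarrow> nat)) \<Rightarrow> nat \<Rightarrow> 'w \<Rightarrow> (nat \<Rightarrow> nat)" where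
  "sojourn S n \<omega> = (if n = 0 then (\<lambda>i. 0) else (\<lambda>i. S n \<omega> i - S (n - 1) \<omega> i))"

definition prodY :: "(nat \<Rightarrow> 'w \<Rightarrow> (nat \<Rightarrow> nat)) \<Rightarrow> nat \<Rightarrow> nat \<Rightarrow> nat \<Rightarrow> 'w \<Rightarrow> nat" where
  "prodY S u v n \<omega> = (if n = 0 then 0 else sojourn S n \<omega> u * sojourn S n \<omega> v)"

definition Sy :: "(nat \<Rightarrow> 'w \<Rightarrow> (nat \<Rightarrow> nat)) \<Rightarrow> nat \<Rightarrow> nat \<Rightarrow> nat \<Rightarrow> 'w \<Rightarrow> nat" where
  "Sy S u v n \<omega> = (\<Sum>k\<le>n. prodY S u v k \<omega>)"

definition qy :: "nat \<Rightarrow> (nat \<Rightarrow> nat \<Rightarrow> (nat \<Rightarrow> nat) \<Rightarrow> real) \<Rightarrow> nat \<Rightarrow> nat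
    \<Rightarrow> nat \<Rightarrow> nat \<Rightarrow> nat \<Rightarrow> real" where
  "qy d q u v i j k = infsum (q i j) {kv \<in> NatVec d. kv u * kv v = k}"

end

theory Submission
  imports Defs
begin

lemma countable_NatVec: "countable (NatVec d)"
proof -
  have "NatVec d \<subseteq> range (\<lambda>l::nat list. \<lambda>i. if 1 \<le> i \<and> i \<le> d then l ! (i-1) else 0)"
  proof
    fix k assume k: "k \<in> NatVec d"
    have "k = (\<lambda>i. if 1 \<le> i \<and> i \<le> d then (map (\<lambda>i. k (Suc i)) [0..<d]) ! (i-1) else 0)"
      using k by (auto simp: NatVec_def fun_eq_iff Suc_le_eq)
    then show "k \<in> range (\<lambda>l::nat list. \<lambda>i. if 1 \<le> i \<and> i \<le> d then l ! (i-1) else 0)"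
      by blast
  qed
  then show ?thesis by (rule countable_subset) simp
qed

lemma pred_two:
  assumes f: "f \<in> measurable M (count_space UNIV)" and g: "g \<in> measurable M (count_space UNIV)"
    and C: "countable C" and fC: "\<And>\<omega>. \<omega> \<in> space M \<Longrightarrow> f \<omega> \<in> C"
    and gC: "\<And>\<omega>. \<omega> \<in> space M \<Longrightarrow> g \<omega> \<in> C"
  shows "{\<omega>\<in>space M. P (f \<omega>) (g \<omega>)} \<in> sets M"
proof -
  have eq: "{\<omega>\<in>space M. P (f \<omega>) (g \<omega>)} = (\<Union>p\<in>{p\<in>C\<times>C. P (fst p) (snd p)}.
      (f -` {fst p} \<inter> space M) \<inter> (g -` {snd p} \<inter> space M))"
    using fC gC by auto
  have cnt: "countable {p\<in>C\<times>C. P (fst p) (snd p)}"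
    by (rule countable_subset[of _ "C \<times> C"]) (auto intro: C)
  show ?thesis unfolding eq
    by (rule sets.countable_UN'[OF cnt])
       (auto intro!: sets.Int measurable_sets[OF f] measurable_sets[OF g])
qed

lemma hist_sets:
  assumes "\<And>m. J m \<in> measurable M (count_space UNIV)" "\<And>m. S m \<in> measurable M (count_space UNIV)"
  shows "hist_event M J S n js ss \<in> sets M"
proof -
  have "hist_event M J S n js ss = space M \<inter> (\<Inter>m\<in>{..n}. (J m -` {js m} \<inter> space M) \<inter> (S m -` {ss m} \<inter> space M))"
    by (auto simp: hist_event_def)
  also have "\<dots> \<in> sets M"
  proof -
    have a: "\<And>m. J m -` {js m} \<inter> space M \<in> sets M" by (rule measurable_sets[OF assms(1)]) simp
    have b: "\<And>m. S m -` {ss m} \<inter> space M \<in> sets M" by (rule measurable_sets[OF assms(2)]) simp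
    have c: "\<And>m. (J m -` {js m} \<inter> space M) \<inter> (S m -` {ss m} \<inter> space M) \<in> sets M"
      using a b by (rule sets.Int)
    show ?thesis by (rule sets.Int[OF sets.top], rule sets.finite_INT) (auto simp only: c finite_atMost atMost_iff)
  qed
  finally show ?thesis .
qed

theorem corollary2:
  fixes M :: "'w measure" and d s u v :: nat
    and J :: "nat \<Rightarrow> 'w \<Rightarrow> nat" and S :: "nat \<Rightarrow> 'w \<Rightarrow> (nat \<Rightarrow> nat)"
    and q :: "nat \<Rightarrow> nat \<Rightarrow> (nat \<Rightarrow> nat) \<Rightarrow> real"
  assumes "MTMRC M d s J S q"
    and "1 \<le> u" and "u < v" and "v \<le> d"
  shows "MRC_kernel M J (Sy S u v) (qy d q u v)"
proof -
  have PS: "prob_space M" and MJ: "\<And>n. J n \<in> measurable M (count_space UNIV)"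
    and MS: "\<And>n. S n \<in> measurable M (count_space UNIV)"
    and SC: "\<And>n \<omega>. \<omega> \<in> space M \<Longrightarrow> S n \<omega> \<in> NatVec d"
    and ker: "\<And>n j k js ss. measure M ({\<omega> \<in> space M. J (Suc n) \<omega> = j \<and> (\<lambda>i. S (Suc n) \<omega> i - S n \<omega> i) = k}
                    \<inter> hist_event M J S n js ss) = q (js n) j k * measure M (hist_event M J S n js ss)"
    using assms(1) unfolding MTMRC_def by blast+
  interpret prob_space M by (rule PS)
  show ?thesis unfolding MRC_kernel_def
  proof (intro allI)
    fix n j k js ts
    define C where "C = NatVec d"
    have cC: "countable C" unfolding C_def by (rule countable_NatVec)
    define HS where "HS = {ss :: nat \<Rightarrow> nat \<Rightarrow> nat. \<forall>m. (m \<le> n \<longrightarrow> ss m \<in> C) \<and> (n < m \<longrightarrow> ss m = (\<lambda>i. 0))}"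
    have cHS: "countable HS"
    proof -
      have "HS \<subseteq> (\<lambda>l m. if m \<le> n then l ! m else (\<lambda>i. 0)) ` (lists C \<inter> {l. length l = Suc n})"
      proof
        fix ss assume ss: "ss \<in> HS"
        have "ss = (\<lambda>m. if m \<le> n then (map ss [0..<Suc n]) ! m else (\<lambda>i. 0))"
        proof (rule ext)
          fix m show "ss m = (if m \<le> n then (map ss [0..<Suc n]) ! m else (\<lambda>i. 0))"
            using ss by (cases "m \<le> n") (auto simp: HS_def nth_map_upt simp del: upt_Suc)
        qed
        moreover have "map ss [0..<Suc n] \<in> lists C \<inter> {l. length l = Suc n}"
          using ss by (auto simp: HS_def)
        ultimately show "ss \<in> (\<lambda>l m. if m \<le> n then l ! m else (\<lambda>i. 0)) ` (lists C \<inter> {l. length l = Suc n})"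
          by blast
      qed
      moreover have "countable ((\<lambda>l m. if m \<le> n then l ! m else (\<lambda>i. 0)) ` (lists C \<inter> {l. length l = Suc n}))"
        using cC by auto
      ultimately show ?thesis by (rule countable_subset)
    qed
    define H where "H ss = hist_event M J S n js ss" for ss
    define F where "F ss m = (\<Sum>l\<le>m. if l = 0 then 0 else (ss l u - ss (l-1) u) * (ss l v - ss (l-1) v))"
      for ss :: "nat \<Rightarrow> nat \<Rightarrow> nat" and m
    have SyF: "Sy S u v m \<omega> = F (\<lambda>l. S l \<omega>) m" for m \<omega>
      unfolding Sy_def F_def prodY_def sojourn_def by (intro sum.cong) auto
    have Fcong: "F ss m = F ss' m" if "\<And>l. l \<le> m \<Longrightarrow> ss l = ss' l" for ss ss' m
      unfolding F_def using that by (intro sum.cong) auto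
    define B where "B = {ss \<in> HS. \<forall>m\<le>n. F ss m = ts m}"
    have BHS: "B \<subseteq> HS" by (auto simp: B_def)
    have cB: "countable B" using cHS BHS by (rule countable_subset[rotated])
    define Hy where "Hy = hist_event M J (Sy S u v) n js ts"
    have Hsets: "H ss \<in> sets M" for ss unfolding H_def by (rule hist_sets[OF MJ MS])
    have Hdisj: "disjoint_family_on H HS"
    proof (unfold disjoint_family_on_def, intro ballI impI)
      fix a b assume a: "a \<in> HS" and b: "b \<in> HS" and ab: "a \<noteq> b"
      show "H a \<inter> H b = {}"
      proof (rule ccontr)
        assume "H a \<inter> H b \<noteq> {}"
        then obtain \<omega> where "\<omega> \<in> H a" "\<omega> \<in> H b" by blast
        then have eq: "\<forall>m\<le>n. a m = b m" by (auto simp: H_def hist_event_def)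
        have "a = b"
        proof (rule ext)
          fix m show "a m = b m"
            using a b eq by (cases "m \<le> n") (auto simp: HS_def)
        qed
        with ab show False by simp
      qed
    qed
    have HdisjB: "disjoint_family_on H B" by (rule disjoint_family_on_mono[OF BHS Hdisj])
    have HyU: "Hy = (\<Union>ss\<in>B. H ss)"
    proof
      show "Hy \<subseteq> (\<Union>ss\<in>B. H ss)"
      proof
        fix \<omega> assume w: "\<omega> \<in> Hy"
        define h where "h = (\<lambda>m. if m \<le> n then S m \<omega> else (\<lambda>i::nat. 0::nat))"
        have wsp: "\<omega> \<in> space M" using w by (simp add: Hy_def hist_event_def)
        have "h \<in> HS" using SC[OF wsp] by (auto simp: h_def HS_def C_def)
        moreover have "\<forall>m\<le>n. F h m = ts m"
        proof (intro allI impI)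
          fix m assume "m \<le> n"
          then have "F h m = F (\<lambda>l. S l \<omega>) m" by (intro Fcong) (auto simp: h_def)
          also have "\<dots> = Sy S u v m \<omega>" by (simp add: SyF)
          also have "\<dots> = ts m" using w \<open>m \<le> n\<close> by (simp add: Hy_def hist_event_def)
          finally show "F h m = ts m" .
        qed
        moreover have "\<omega> \<in> H h" using w by (auto simp: H_def Hy_def hist_event_def h_def)
        ultimately show "\<omega> \<in> (\<Union>ss\<in>B. H ss)" by (auto simp: B_def)
      qed
      show "(\<Union>ss\<in>B. H ss) \<subseteq> Hy"
      proof
        fix \<omega> assume "\<omega> \<in> (\<Union>ss\<in>B. H ss)"
        then obtain ss where ss: "ss \<in> B" "\<omega> \<in> H ss" by blast
        have "Sy S u v m \<omega> = ts m" if "m \<le> n" for m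
        proof -
          have "Sy S u v m \<omega> = F (\<lambda>l. S l \<omega>) m" by (simp add: SyF)
          also have "\<dots> = F ss m" using ss that by (intro Fcong) (auto simp: H_def hist_event_def)
          also have "\<dots> = ts m" using ss that by (auto simp: B_def)
          finally show ?thesis .
        qed
        then show "\<omega> \<in> Hy" using ss by (auto simp: Hy_def H_def hist_event_def)
      qed
    qed
    have Hysets: "Hy \<in> sets M" unfolding HyU
      by (rule sets.countable_UN'[OF cB]) (auto intro: Hsets)
    define E where "E kv = {\<omega> \<in> space M. J (Suc n) \<omega> = j \<and> (\<lambda>i. S (Suc n) \<omega> i - S n \<omega> i) = kv}" for kv
    have Esets: "E kv \<in> sets M" for kv
    proof -
      have "E kv = (J (Suc n) -` {j} \<inter> space M) \<inter> {\<omega>\<in>space M. (\<lambda>i. S (Suc n) \<omega> i - S n \<omega> i) = kv}"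
        by (auto simp: E_def)
      also have "\<dots> \<in> sets M"
        by (rule sets.Int[OF measurable_sets[OF MJ] pred_two[OF MS MS cC, where P="\<lambda>a b. (\<lambda>i. a i - b i) = kv"]])
           (auto simp: C_def SC)
      finally show ?thesis .
    qed
    have Ekern: "measure M (E kv \<inter> H ss) = q (js n) j kv * measure M (H ss)" for kv ss
      unfolding E_def H_def by (rule ker)
    define K where "K = {kv \<in> NatVec d. kv u * kv v = k}"
    have cK: "countable K" using cC unfolding K_def C_def by (rule countable_subset[rotated]) auto
    define A where "A = {\<omega> \<in> space M. J (Suc n) \<omega> = j \<and> Sy S u v (Suc n) \<omega> - Sy S u v n \<omega> = k}"
    have Ydiff: "Sy S u v (Suc n) \<omega> - Sy S u v n \<omega> = (S (Suc n) \<omega> u - S n \<omega> u) * (S (Suc n) \<omega> v - S n \<omega> v)" for \<omega>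
      by (simp add: Sy_def prodY_def sojourn_def)
    have Xin: "(\<lambda>i. S (Suc n) \<omega> i - S n \<omega> i) \<in> NatVec d" if "\<omega> \<in> space M" for \<omega>
      using SC[OF that, of "Suc n"] by (auto simp: NatVec_def)
    have AU: "A \<inter> Hy = (\<Union>kv\<in>K. E kv \<inter> Hy)"
    proof
      show "A \<inter> Hy \<subseteq> (\<Union>kv\<in>K. E kv \<inter> Hy)"
      proof
        fix \<omega> assume w: "\<omega> \<in> A \<inter> Hy"
        then have wsp: "\<omega> \<in> space M" by (auto simp: A_def)
        show "\<omega> \<in> (\<Union>kv\<in>K. E kv \<inter> Hy)"
          by (rule UN_I[of "\<lambda>i. S (Suc n) \<omega> i - S n \<omega> i"])
             (use w Xin[OF wsp] in \<open>auto simp: K_def A_def E_def Ydiff\<close>)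
      qed
      show "(\<Union>kv\<in>K. E kv \<inter> Hy) \<subseteq> A \<inter> Hy"
        by (auto simp: K_def A_def E_def Ydiff)
    qed
    have Hy_int: "emeasure M Hy = (\<integral>\<^sup>+ss. emeasure M (H ss) \<partial>count_space B)"
      unfolding HyU by (rule emeasure_UN_countable) (auto simp: Hsets cB HdisjB)
    have Ekey: "emeasure M (E kv \<inter> Hy) = (\<integral>\<^sup>+ss. emeasure M (E kv \<inter> H ss) \<partial>count_space B)" for kv
    proof -
      have "E kv \<inter> Hy = (\<Union>ss\<in>B. E kv \<inter> H ss)" using HyU by auto
      also have "emeasure M \<dots> = (\<integral>\<^sup>+ss. emeasure M (E kv \<inter> H ss) \<partial>count_space B)"
        by (rule emeasure_UN_countable)
           (use HdisjB in \<open>auto simp: cB Esets Hsets disjoint_family_on_def\<close>)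
      finally show ?thesis .
    qed
    have goal: "measure M (A \<inter> Hy) = qy d q u v (js n) j k * measure M Hy"
    proof (cases "measure M Hy = 0")
      case True
      have "measure M (A \<inter> Hy) \<le> measure M Hy"
        by (rule finite_measure_mono) (auto simp: Hysets)
      then have "measure M (A \<inter> Hy) = 0" using True by (simp add: measure_nonneg antisym)
      then show ?thesis using True by simp
    next
      case False
      then have mpos: "measure M Hy > 0" using measure_nonneg[of M Hy] by linarith
      obtain ss0 where ss0: "measure M (H ss0) > 0"
      proof (rule ccontr)
        assume "\<not> thesis"
        then have z: "\<And>ss. measure M (H ss) \<le> 0" using that by (meson not_le)
        have "emeasure M Hy = (\<integral>\<^sup>+ss. 0 \<partial>count_space B)"
          unfolding Hy_int
        proof (rule nn_integral_cong)
          fix ss show "emeasure M (H ss) = 0"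
            using z[of ss] measure_nonneg[of M "H ss"] by (simp add: emeasure_eq_measure)
        qed
        then show False using mpos by (simp add: measure_def)
      qed
      have qnn: "q (js n) j kv \<ge> 0" for kv
      proof -
        have "0 \<le> measure M (E kv \<inter> H ss0)" by (rule measure_nonneg)
        then show ?thesis using ss0 by (simp add: Ekern zero_le_mult_iff)
      qed
      have Ekv: "emeasure M (E kv \<inter> Hy) = ennreal (q (js n) j kv) * emeasure M Hy" for kv
      proof -
        have "emeasure M (E kv \<inter> Hy) = (\<integral>\<^sup>+ss. ennreal (q (js n) j kv) * emeasure M (H ss) \<partial>count_space B)"
          unfolding Ekey
        proof (rule nn_integral_cong)
          fix ss show "emeasure M (E kv \<inter> H ss) = ennreal (q (js n) j kv) * emeasure M (H ss)"
            by (simp add: emeasure_eq_measure Ekern ennreal_mult qnn)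
        qed
        also have "\<dots> = ennreal (q (js n) j kv) * emeasure M Hy"
          unfolding Hy_int by (rule nn_integral_cmult) simp
        finally show ?thesis .
      qed
      define I where "I = (\<integral>\<^sup>+kv. ennreal (q (js n) j kv) \<partial>count_space K)"
      have AHy: "emeasure M (A \<inter> Hy) = I * emeasure M Hy"
      proof -
        have "emeasure M (A \<inter> Hy) = (\<integral>\<^sup>+kv. emeasure M (E kv \<inter> Hy) \<partial>count_space K)"
          unfolding AU
          apply (rule emeasure_UN_countable)
            apply (rule sets.Int[OF Esets Hysets])
           apply (rule cK)
          by (auto simp: disjoint_family_on_def E_def)
        also have "\<dots> = (\<integral>\<^sup>+kv. ennreal (q (js n) j kv) * emeasure M Hy \<partial>count_space K)"
          by (simp add: Ekv)
        also have "\<dots> = I * emeasure M Hy"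
          unfolding I_def by (rule nn_integral_multc) simp
        finally show ?thesis .
      qed
      have Ifin: "I \<noteq> \<infinity>"
      proof
        assume "I = \<infinity>"
        then have "emeasure M (A \<inter> Hy) = \<infinity>" using AHy mpos
          by (simp add: emeasure_eq_measure ennreal_mult_eq_top_iff)
        then show False by (simp add: emeasure_eq_measure)
      qed
      have summ: "integrable (count_space K) (q (js n) j)"
        by (rule integrableI_nonneg) (use Ifin qnn in \<open>auto simp: I_def less_top\<close>)
      have "qy d q u v (js n) j k = infsetsum (q (js n) j) K"
        unfolding qy_def K_def[symmetric] by (rule infsetsum_infsum[symmetric]) (simp add: Infinite_Set_Sum.abs_summable_on_def summ)
      also have "\<dots> = enn2real I"
        unfolding I_def by (rule infsetsum_conv_nn_integral) (use Ifin qnn in \<open>auto simp: I_def\<close>)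
      finally have qI: "qy d q u v (js n) j k = enn2real I" .
      show ?thesis
        unfolding measure_def AHy qI by (simp add: enn2real_mult)
    qed
    then show "measure M ({\<omega> \<in> space M. J (Suc n) \<omega> = j \<and> Sy S u v (Suc n) \<omega> - Sy S u v n \<omega> = k}
                    \<inter> hist_event M J (Sy S u v) n js ts)
        = qy d q u v (js n) j k * measure M (hist_event M J (Sy S u v) n js ts)"
      by (simp add: A_def Hy_def)
  qed
qed

end
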